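(* Let $U\subset\mathbb{C}\setminus\{0\}$ be a connected domain on which an analytic branch of $\ln x$ is fixed, and write $x^{c}=e^{c\ln x}$ for $c\in\mathbb{C}$. Let $f_1,f_2$ be holomorphic and nowhere vanishing on $U$. Then $(f_1,f_2)$ is a nondegenerate period-$2$ orbit of $\mathcal{A}$ (i.e. $\mathcal{A}[f_1]=f_2$, $\mathcal{A}[f_2]=f_1$ and $f_1\not\equiv f_2$) if and only if there exist constants $a,c\in\mathbb{C}\setminus\{0\}$ with $1-ax^{c}\neq 0$ on $U$ such that \[ f_1(x)=\frac{c\,a\,x^{c}}{1-ax^{c}},\qquad f_2(x)=\frac{c}{1-ax^{c}}\qquad (x\in U). \] Moreover, the ordering of the pair is irrelevant: the unordered set $\{f_1,f_2\}$ represents a single $2$-cycle of $\mathcal{A}$.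
   Context: For a complex-differentiable, nowhere-vanishing function $f$ on a domain $U\subset\mathbb{C}\setminus\{0\}$, the dual logarithmic derivative operator is $\mathcal{A}[f](x)=\dfrac{\mathrm{d}\ln f(x)}{\mathrm{d}\ln x}=\dfrac{x f'(x)}{f(x)}$ (for fixed analytic branches of the logarithms). A pair $(f_1,f_2)$ of holomorphic nowhere-vanishing functions on $U$ is a period-$2$ orbit of $\mathcal{A}$ if $\mathcal{A}[f_1]=f_2$ and $\mathcal{A}[f_2]=f_1$; it is nondegenerate if $f_1\not\equiv f_2$. *)

theory Defs
  imports "HOL-Complex_Analysis.Complex_Analysis"
begin

definition log_branch :: "(complex \<Rightarrow> complex) \<Rightarrow> complex set \<Rightarrow> bool" where
  "log_branch L U \<longleftrightarrow> L holomorphic_on U \<and> (\<forall>x\<in>U. exp (L x) = x)"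

definition bpow :: "(complex \<Rightarrow> complex) \<Rightarrow> complex \<Rightarrow> complex \<Rightarrow> complex" where
  "bpow L x c = exp (c * L x)"

text \<open>Dual logarithmic derivative A[f](x) = x f'(x) / f(x).\<close>
definition dual_log_deriv :: "(complex \<Rightarrow> complex) \<Rightarrow> complex \<Rightarrow> complex" where
  "dual_log_deriv f x = x * deriv f x / f x"

definition nondeg_period2_orbit :: "complex set \<Rightarrow> (complex \<Rightarrow> complex) \<Rightarrow> (complex \<Rightarrow> complex) \<Rightarrow> bool" where
  "nondeg_period2_orbit U f1 f2 \<longleftrightarrow>
     (\<forall>x\<in>U. dual_log_deriv f1 x = f2 x) \<and> (\<forall>x\<in>U. dual_log_deriv f2 x = f1 x) \<and>
     (\<exists>x\<in>U. f1 x \<noteq> f2 x)"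

end

theory Submission
  imports Defs
begin

lemma const_on_U:
  fixes h :: "complex \<Rightarrow> complex"
  assumes "open U" "connected U" "h holomorphic_on U"
    and "\<And>x. x \<in> U \<Longrightarrow> (h has_field_derivative 0) (at x)"
  obtains k where "\<And>x. x \<in> U \<Longrightarrow> h x = k"
proof -
  have "continuous_on U h" using assms(3) holomorphic_on_imp_continuous_on by blast
  then show ?thesis
    using DERIV_zero_connected_constant[of U "{}" h] assms that by auto
qed

lemma log_deriv:
  assumes "open U" "log_branch L U" "x \<in> U"
  shows "(L has_field_derivative deriv L x) (at x)" "x * deriv L x = 1"
proof -
  have hol: "L holomorphic_on U" using assms(2) unfolding log_branch_def by auto
  show dL: "(L has_field_derivative deriv L x) (at x)"
    using holomorphic_derivI[OF hol assms(1) assms(3)] by simp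
  have "((\<lambda>y. exp (L y)) has_field_derivative exp (L x) * deriv L x) (at x)"
    using DERIV_chain2[OF DERIV_exp dL] by simp
  then have "((\<lambda>y. y) has_field_derivative exp (L x) * deriv L x) (at x)"
    using has_field_derivative_transform_within_open[OF _ assms(1) assms(3), of _ _ "\<lambda>y. y"]
      assms(2) unfolding log_branch_def by auto
  then have "exp (L x) * deriv L x = 1" using DERIV_unique DERIV_ident by blast
  then show "x * deriv L x = 1" using assms(2,3) unfolding log_branch_def by auto
qed

lemma aux_id:
  fixes w c E :: complex
  assumes "1 - E \<noteq> 0"
  shows "c * E / (1 - E) = c / (1 - E) - c"
  using assms by (simp add: field_simps)

theorem theorem4p2:
  fixes U :: "complex set" and L f1 f2 :: "complex \<Rightarrow> complex"
  assumes "open U" and "connected U" and "U \<noteq> {}" and "0 \<notin> U"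
    and "log_branch L U"
    and "f1 holomorphic_on U" and "f2 holomorphic_on U"
    and "\<forall>x\<in>U. f1 x \<noteq> 0" and "\<forall>x\<in>U. f2 x \<noteq> 0"
  shows "nondeg_period2_orbit U f1 f2 \<longleftrightarrow>
    (\<exists>a c. a \<noteq> 0 \<and> c \<noteq> 0 \<and> (\<forall>x\<in>U. 1 - a * bpow L x c \<noteq> 0) \<and>
       (\<forall>x\<in>U. f1 x = c * a * bpow L x c / (1 - a * bpow L x c) \<and>
               f2 x = c / (1 - a * bpow L x c)))"
proof
  have hL: "L holomorphic_on U" using assms(5) unfolding log_branch_def by auto
  have x0: "\<And>x. x \<in> U \<Longrightarrow> x \<noteq> 0" using assms(4) by auto
  have D1: "\<And>x. x \<in> U \<Longrightarrow> (f1 has_field_derivative deriv f1 x) (at x)"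
    using holomorphic_derivI[OF assms(6) assms(1)] by simp
  have D2: "\<And>x. x \<in> U \<Longrightarrow> (f2 has_field_derivative deriv f2 x) (at x)"
    using holomorphic_derivI[OF assms(7) assms(1)] by simp
  {
    assume N: "nondeg_period2_orbit U f1 f2"
    have d1: "deriv f1 x = f1 x * f2 x / x" if "x \<in> U" for x
      using N that x0[OF that] assms(8) unfolding nondeg_period2_orbit_def dual_log_deriv_def
      by (auto simp: field_simps)
    have d2: "deriv f2 x = f1 x * f2 x / x" if "x \<in> U" for x
      using N that x0[OF that] assms(9) unfolding nondeg_period2_orbit_def dual_log_deriv_def
      by (auto simp: field_simps)
    obtain k where k: "\<And>x. x \<in> U \<Longrightarrow> f1 x - f2 x = k"
    proof (rule const_on_U[OF assms(1,2), of "\<lambda>x. f1 x - f2 x"])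
      show "(\<lambda>x. f1 x - f2 x) holomorphic_on U" using assms(6,7) by (intro holomorphic_intros)
      fix x assume "x \<in> U"
      then show "((\<lambda>x. f1 x - f2 x) has_field_derivative 0) (at x)"
        using DERIV_diff[OF D1 D2, of x] d1 d2 by simp
    qed (use that in blast)
    define c where "c = - k"
    have fc: "\<And>x. x \<in> U \<Longrightarrow> f2 x - f1 x = c" using k c_def by force
    have c0: "c \<noteq> 0" using N fc unfolding nondeg_period2_orbit_def by force
    define h where "h = (\<lambda>x. f1 x / f2 x * exp (- c * L x))"
    obtain a where a: "\<And>x. x \<in> U \<Longrightarrow> h x = a"
    proof (rule const_on_U[OF assms(1,2), of h])
      show "h holomorphic_on U" unfolding h_def using assms(6,7,9) hL
        by (intro holomorphic_intros) auto
      fix x assume xU: "x \<in> U"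
      have dL: "(L has_field_derivative deriv L x) (at x)" "x * deriv L x = 1"
        using log_deriv[OF assms(1,5) xU] by auto
      have "(h has_field_derivative
          f1 x / f2 x * (exp (- c * L x) * (- c * deriv L x)) +
          (deriv f1 x * f2 x - f1 x * deriv f2 x) / (f2 x * f2 x) * exp (- c * L x)) (at x)"
        unfolding h_def
        by (rule DERIV_mult'[OF DERIV_divide[OF D1[OF xU] D2[OF xU]] DERIV_chain2[OF DERIV_exp DERIV_cmult[OF dL(1)]]])
          (use xU assms(9) in auto)
      moreover have "f1 x / f2 x * (exp (- c * L x) * (- c * deriv L x)) +
          (deriv f1 x * f2 x - f1 x * deriv f2 x) / (f2 x * f2 x) * exp (- c * L x) = 0"
      proof -
        have e: "deriv L x = 1 / x" using dL(2) x0[OF xU] by (simp add: field_simps)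
        have f2e: "f2 x = f1 x + c" using fc[OF xU] by (metis add.commute diff_add_cancel)
        have q: "f2 x \<noteq> 0" using assms(9) xU by auto
        have "(f1 x * f2 x / x * f2 x - f1 x * (f1 x * f2 x / x)) / (f2 x * f2 x)
            = f1 x * (f2 x - f1 x) / (f2 x * x)" using q x0[OF xU] by (simp add: field_simps)
        also have "\<dots> = f1 x * c / (f2 x * x)" using fc[OF xU] by simp
        finally have *: "(f1 x * f2 x / x * f2 x - f1 x * (f1 x * f2 x / x)) / (f2 x * f2 x)
            = f1 x * c / (f2 x * x)" .
        show ?thesis unfolding d1[OF xU] d2[OF xU] e * by (simp add: field_simps)
      qed
      ultimately show "(h has_field_derivative 0) (at x)" by simp
    qed (use that in blast)
    obtain x1 where x1: "x1 \<in> U" using assms(3) by auto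
    have a0: "a \<noteq> 0" using a[OF x1] assms(8,9) x1 unfolding h_def by auto
    have rat: "f1 x = a * bpow L x c * f2 x" if "x \<in> U" for x
    proof -
      have "f1 x / f2 x * exp (- c * L x) * exp (c * L x) = a * exp (c * L x)"
        using a[OF that] unfolding h_def by simp
      moreover have "exp (- c * L x) * exp (c * L x) = 1" by (simp add: exp_add[symmetric])
      ultimately have "f1 x / f2 x = a * exp (c * L x)"
        by (metis mult.assoc mult.right_neutral)
      then show ?thesis using assms(9) that unfolding bpow_def
        by (simp add: divide_eq_eq)
    qed
    have "\<exists>a c. a \<noteq> 0 \<and> c \<noteq> 0 \<and> (\<forall>x\<in>U. 1 - a * bpow L x c \<noteq> 0) \<and>
       (\<forall>x\<in>U. f1 x = c * a * bpow L x c / (1 - a * bpow L x c) \<and>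
               f2 x = c / (1 - a * bpow L x c))"
    proof (intro exI conjI ballI)
      show "a \<noteq> 0" "c \<noteq> 0" by fact+
      fix x assume xU: "x \<in> U"
      have eq: "f2 x * (1 - a * bpow L x c) = c" using fc[OF xU] rat[OF xU] by (simp add: algebra_simps)
      then show ne: "1 - a * bpow L x c \<noteq> 0" using c0 by auto
      show "f2 x = c / (1 - a * bpow L x c)" using eq ne by (simp add: field_simps)
      then show "f1 x = c * a * bpow L x c / (1 - a * bpow L x c)" using rat[OF xU] by simp
    qed
  }
  then show "nondeg_period2_orbit U f1 f2 \<Longrightarrow> (\<exists>a c. a \<noteq> 0 \<and> c \<noteq> 0 \<and> (\<forall>x\<in>U. 1 - a * bpow L x c \<noteq> 0) \<and>
       (\<forall>x\<in>U. f1 x = c * a * bpow L x c / (1 - a * bpow L x c) \<and>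
               f2 x = c / (1 - a * bpow L x c)))" by blast
  show "nondeg_period2_orbit U f1 f2" if "\<exists>a c. a \<noteq> 0 \<and> c \<noteq> 0 \<and> (\<forall>x\<in>U. 1 - a * bpow L x c \<noteq> 0) \<and>
       (\<forall>x\<in>U. f1 x = c * a * bpow L x c / (1 - a * bpow L x c) \<and>
               f2 x = c / (1 - a * bpow L x c))"
  proof -
    from that obtain a c where a0: "a \<noteq> 0" and c0: "c \<noteq> 0"
      and ne: "\<forall>x\<in>U. 1 - a * exp (c * L x) \<noteq> 0"
      and F: "\<forall>x\<in>U. f1 x = c * a * exp (c * L x) / (1 - a * exp (c * L x)) \<and>
               f2 x = c / (1 - a * exp (c * L x))"
      unfolding bpow_def by blast
    have fd: "f1 x = f2 x - c" if "x \<in> U" for x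
    proof -
      have w: "1 - a * exp (c * L x) \<noteq> 0" using ne that by auto
      have "f1 x = c * a * exp (c * L x) / (1 - a * exp (c * L x))"
        "f2 x = c / (1 - a * exp (c * L x))" using F that by auto
      then show ?thesis using aux_id[OF w, of c] by (simp add: mult.assoc)
    qed
    have key: "x * deriv f2 x = f1 x * f2 x" if xU: "x \<in> U" for x
    proof -
      have dL: "(L has_field_derivative deriv L x) (at x)" "x * deriv L x = 1"
        using log_deriv[OF assms(1,5) xU] by auto
      have "((\<lambda>y. c / (1 - a * exp (c * L y))) has_field_derivative
          (0 * (1 - a * exp (c * L x)) - c * (0 - a * (exp (c * L x) * (c * deriv L x)))) / ((1 - a * exp (c * L x)) * (1 - a * exp (c * L x)))) (at x)"
        by (rule DERIV_divide[OF DERIV_const DERIV_diff[OF DERIV_const DERIV_cmult[OF DERIV_chain2[OF DERIV_exp DERIV_cmult[OF dL(1)]]]]])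
          (use xU ne in auto)
      then have "(f2 has_field_derivative
          (0 * (1 - a * exp (c * L x)) - c * (0 - a * (exp (c * L x) * (c * deriv L x)))) / ((1 - a * exp (c * L x)) * (1 - a * exp (c * L x)))) (at x)"
        by (rule has_field_derivative_transform_within_open[OF _ assms(1) xU]) (use F in auto)
      then have "deriv f2 x = (0 * (1 - a * exp (c * L x)) - c * (0 - a * (exp (c * L x) * (c * deriv L x)))) / ((1 - a * exp (c * L x)) * (1 - a * exp (c * L x)))"
        using DERIV_unique D2[OF xU] by blast
      then have "x * deriv f2 x = c * c * a * exp (c * L x) * (x * deriv L x) / ((1 - a * exp (c * L x)) * (1 - a * exp (c * L x)))"
        by (simp add: field_simps)
      also have "\<dots> = (c * a * exp (c * L x) / (1 - a * exp (c * L x))) * (c / (1 - a * exp (c * L x)))"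
        unfolding dL(2) times_divide_times_eq by (simp add: mult_ac)
      also have "\<dots> = f1 x * f2 x" using F xU by simp
      finally show ?thesis .
    qed
    have dd: "deriv f1 x = deriv f2 x" if xU: "x \<in> U" for x
    proof -
      have "((\<lambda>y. f2 y - c) has_field_derivative deriv f2 x - 0) (at x)"
        by (rule DERIV_diff[OF D2[OF xU] DERIV_const])
      then have "(f1 has_field_derivative deriv f2 x - 0) (at x)"
        by (rule has_field_derivative_transform_within_open[OF _ assms(1) xU]) (simp add: fd)
      then have "(f1 has_field_derivative deriv f2 x) (at x)" by simp
      then show ?thesis using DERIV_unique D1[OF xU] by blast
    qed
    obtain x1 where x1: "x1 \<in> U" using assms(3) by auto
    show ?thesis unfolding nondeg_period2_orbit_def dual_log_deriv_def
    proof (intro conjI ballI bexI[OF _ x1])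
      fix x assume xU: "x \<in> U"
      have "f1 x \<noteq> 0" using assms(8) xU by auto
      then show "x * deriv f1 x / f1 x = f2 x" by (simp add: key[OF xU] dd[OF xU])
      have "f2 x \<noteq> 0" using assms(9) xU by auto
      then show "x * deriv f2 x / f2 x = f1 x" by (simp add: key[OF xU])
    next
      show "f1 x1 \<noteq> f2 x1" using fd[OF x1] c0 by simp
    qed
  qed
qed

end
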